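(* Let $A$ be a $J_p$-set in $(\mathbb{N},+)$ and let $B\subseteq\mathbb{N}$ be finite. Then $A\setminus B$ is a $J_p$-set in $(\mathbb{N},+)$.
   Context: $\mathbb{N}=\{1,2,\dots\}$. $\mathbb{P}$ denotes the set of polynomials with coefficients in $\mathbb{N}\cup\{0\}$ and zero constant term which map $\mathbb{N}$ into $\mathbb{N}$. $\mathcal{P}_f(X)$ is the set of nonempty finite subsets of $X$, and ${}^{\mathbb{N}}\mathbb{N}$ the set of sequences in $\mathbb{N}$. For $R\in\mathcal{P}_f(\mathbb{P})$, $L\in\mathcal{P}_f({}^{\mathbb{N}}\mathbb{N})$, $a\in\mathbb{N}$, $H\in\mathcal{P}_f(\mathbb{N})$, $S_{R,L}(a,H)=\{a+f(\sum_{t\in H}g(t)): f\in R, g\in L\}$. $A\subseteq\mathbb{N}$ is a $J_p$-set if for every $R\in\mathcal{P}_f(\mathbb{P})$ and $L\in\mathcal{P}_f({}^{\mathbb{N}}\mathbb{N})$ there exist $a\in\mathbb{N}$ and $H\in\mathcal{P}_f(\mathbb{N})$ with $S_{R,L}(a,H)\subseteq A$. *)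

theory Defs
  imports "HOL-Computational_Algebra.Polynomial"
begin

text \<open>N = {1,2,...} is represented by the positive naturals.
  The class P: polynomials with coefficients in N \<union> {0}, zero constant term,
  mapping N into N.\<close>
definition Pset :: "nat poly set" where
  "Pset = {f. poly f 0 = 0 \<and> (\<forall>n::nat. n \<ge> 1 \<longrightarrow> poly f n \<ge> 1)}"

definition Seqs :: "(nat \<Rightarrow> nat) set" where
  "Seqs = {g. \<forall>t::nat. t \<ge> 1 \<longrightarrow> g t \<ge> 1}"

definition S_RL :: "nat poly set \<Rightarrow> (nat \<Rightarrow> nat) set \<Rightarrow> nat \<Rightarrow> nat set \<Rightarrow> nat set" where
  "S_RL R L a H = {a + poly f (\<Sum>t\<in>H. g t) | f g. f \<in> R \<and> g \<in> L}"

definition Jp_set :: "nat set \<Rightarrow> bool" where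
  "Jp_set A \<longleftrightarrow> A \<subseteq> {1..} \<and>
     (\<forall>R L. finite R \<and> R \<noteq> {} \<and> R \<subseteq> Pset \<and> finite L \<and> L \<noteq> {} \<and> L \<subseteq> Seqs \<longrightarrow>
        (\<exists>a H. a \<ge> 1 \<and> finite H \<and> H \<noteq> {} \<and> H \<subseteq> {1..} \<and> S_RL R L a H \<subseteq> A))"

end

theory Submission
  imports Defs
begin

lemma poly_lin_bound:
  fixes f :: "nat poly"
  assumes "poly f 0 = 0"
  shows "n * poly f 1 \<le> poly f n"
proof -
  have c0: "coeff f 0 = 0" using assms by (simp add: poly_0_coeff_0)
  have "n * poly f 1 = (\<Sum>i\<le>degree f. coeff f i * n)"
    by (simp add: poly_altdef sum_distrib_left mult.commute)
  also have "\<dots> \<le> (\<Sum>i\<le>degree f. coeff f i * n ^ i)"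
  proof (rule sum_mono)
    fix i assume "i \<in> {..degree f}"
    show "coeff f i * n \<le> coeff f i * n ^ i"
    proof (cases "i = 0")
      case True then show ?thesis using c0 by simp
    next
      case False
      show ?thesis
      proof (cases "n = 0")
        case True then show ?thesis using False by simp
      next
        case False2: False
        have "n ^ 1 \<le> n ^ i" using False False2 by (intro power_increasing) auto
        then show ?thesis by simp
      qed
    qed
  qed
  also have "\<dots> = poly f n" by (simp add: poly_altdef)
  finally show ?thesis .
qed

lemma inj_block:
  fixes K :: nat
  shows "inj_on (\<lambda>(t, i). K * t + i) (H \<times> {..<K})"
proof (rule inj_onI, clarsimp)
  fix t i t' i'
  assume "i < K" "i' < K" "K * t + i = K * t' + i'"
  then have "(K * t + i) div K = (K * t' + i') div K" "(K * t + i) mod K = (K * t' + i') mod K" by simp_all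
  with \<open>i < K\<close> \<open>i' < K\<close> show "t = t' \<and> i = i'" by simp
qed

theorem theorem5p3:
  fixes A B :: "nat set"
  assumes "Jp_set A" and "B \<subseteq> {1..}" and "finite B"
  shows "Jp_set (A - B)"
proof -
  define K where "K = Suc (\<Sum>B)"
  have K1: "K \<ge> 1" by (simp add: K_def)
  define \<phi> where "\<phi> g = (\<lambda>t. \<Sum>i<K. (g::nat\<Rightarrow>nat) (K * t + i))" for g
  define e where "e = (\<lambda>(t::nat, i::nat). K * t + i)"
  have Asub: "A \<subseteq> {1..}" using assms(1) unfolding Jp_set_def by blast
  show ?thesis unfolding Jp_set_def
  proof (intro conjI allI impI)
    show "A - B \<subseteq> {1..}" using Asub by blast
  next
    fix R L
    assume RL: "finite R \<and> R \<noteq> {} \<and> R \<subseteq> Pset \<and> finite L \<and> L \<noteq> {} \<and> L \<subseteq> Seqs"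
    have phiS: "\<phi> g \<in> Seqs" if "g \<in> Seqs" for g
      unfolding Seqs_def
    proof (clarsimp)
      fix t :: nat assume t: "Suc 0 \<le> t"
      have kt: "1 \<le> K * t" using mult_le_mono[OF K1 t[folded One_nat_def]] by (simp only: mult_1)
      then have "1 \<le> K * t + 0" by simp
      then have "1 \<le> g (K * t + 0)" using that unfolding Seqs_def by blast
      also have "\<dots> \<le> \<phi> g t" unfolding \<phi>_def
        using K1 by (intro member_le_sum) auto
      finally show "Suc 0 \<le> \<phi> g t" by simp
    qed
    have "finite (\<phi> ` L) \<and> \<phi> ` L \<noteq> {} \<and> \<phi> ` L \<subseteq> Seqs" using RL phiS by auto
    with RL assms(1) obtain a H where aH: "a \<ge> 1" "finite H" "H \<noteq> {}" "H \<subseteq> {1..}"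
      "S_RL R (\<phi> ` L) a H \<subseteq> A" unfolding Jp_set_def by meson
    define H' where "H' = e ` (H \<times> {..<K})"
    have sumeq: "(\<Sum>t\<in>H. \<phi> g t) = (\<Sum>i\<in>H'. g i)" for g
    proof -
      have "(\<Sum>i\<in>H'. g i) = (\<Sum>p\<in>H \<times> {..<K}. g (e p))"
        unfolding H'_def using inj_block[of K H] unfolding e_def
        by (simp add: sum.reindex)
      also have "\<dots> = (\<Sum>t\<in>H. \<Sum>i<K. g (K * t + i))"
        unfolding sum.cartesian_product e_def by (intro sum.cong refl) (simp add: split_def)
      finally show ?thesis by (simp add: \<phi>_def)
    qed
    have H'1: "H' \<subseteq> {1..}"
    proof
      fix x assume "x \<in> H'"
      then obtain t i where "t \<in> H" "x = K * t + i" unfolding H'_def e_def by auto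
      moreover have "1 \<le> t" using \<open>t \<in> H\<close> aH(4) by auto
      then have kt: "1 \<le> K * t" using mult_le_mono[OF K1] by (simp only: mult_1)
      have "1 \<le> K * t + i" by (rule order_trans[OF kt le_add1])
      with \<open>x = K * t + i\<close> show "x \<in> {1..}" by simp
    qed
    have SS: "S_RL R L a H' \<subseteq> S_RL R (\<phi> ` L) a H"
      unfolding S_RL_def
    proof clarify
      fix f g assume "f \<in> R" "g \<in> L"
      then show "\<exists>f' g'. a + poly f (sum g H') = a + poly f' (sum g' H) \<and> f' \<in> R \<and> g' \<in> \<phi> ` L"
        using sumeq[of g] by (intro exI[of _ f] exI[of _ "\<phi> g"]) auto
    qed
    show "\<exists>a H. 1 \<le> a \<and> finite H \<and> H \<noteq> {} \<and> H \<subseteq> {1..} \<and> S_RL R L a H \<subseteq> A - B"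
    proof (intro exI conjI)
      show "finite H'" unfolding H'_def using aH(2) by simp
      show "H' \<noteq> {}" unfolding H'_def using aH(3) K1 by (auto simp: K_def)
      show "H' \<subseteq> {1..}" by (rule H'1)
      show "1 \<le> a" by (rule aH(1))
      show "S_RL R L a H' \<subseteq> A - B"
      proof
        fix x assume x: "x \<in> S_RL R L a H'"
        then have xA: "x \<in> A" using SS aH(5) by blast
        from x obtain f g where fg: "f \<in> R" "g \<in> L" "x = a + poly f (\<Sum>t\<in>H. \<phi> g t)"
          unfolding S_RL_def using sumeq by auto
        obtain t0 where t0: "t0 \<in> H" using aH(3) by blast
        have gS: "\<phi> g \<in> Seqs" using phiS RL fg(2) by auto
        have "K \<le> \<phi> g t0"
        proof -
          have "(\<Sum>i<K. (1::nat)) \<le> \<phi> g t0" unfolding \<phi>_def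
          proof (rule sum_mono)
            fix i assume "i \<in> {..<K}"
            have "1 \<le> t0" using t0 aH(4) by auto
            then have kt: "1 \<le> K * t0" using mult_le_mono[OF K1] by (simp only: mult_1)
            have "K * t0 + i \<ge> 1" by (rule order_trans[OF kt le_add1])
            then show "1 \<le> g (K * t0 + i)" using RL fg(2) unfolding Seqs_def by auto
          qed
          then show ?thesis by simp
        qed
        also have "\<phi> g t0 \<le> (\<Sum>t\<in>H. \<phi> g t)" using aH(2) t0 by (intro member_le_sum) auto
        finally have Ks: "K \<le> (\<Sum>t\<in>H. \<phi> g t)" .
        have fP: "poly f 0 = 0" "poly f 1 \<ge> 1" using fg(1) RL unfolding Pset_def by auto
        have "(\<Sum>t\<in>H. \<phi> g t) * 1 \<le> (\<Sum>t\<in>H. \<phi> g t) * poly f 1"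
          using fP(2) by (intro mult_le_mono2)
        also have "\<dots> \<le> poly f (\<Sum>t\<in>H. \<phi> g t)" by (rule poly_lin_bound[OF fP(1)])
        finally have "K \<le> x" using Ks fg(3) by simp
        then have "x > \<Sum>B" by (simp add: K_def)
        moreover have "x \<le> \<Sum>B" if "x \<in> B"
          using member_le_sum[of x B "\<lambda>x. x"] that assms(3) by simp
        ultimately have "x \<notin> B" by force
        with xA show "x \<in> A - B" by blast
      qed
    qed
  qed
qed

end
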